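(* Let $m>0$ and let $u:(0,\infty)\to\mathbb{R}$ be the function such that the distribution $x\mapsto\frac{1}{2(2\pi)^3}\int_{\mathbb{R}^3}e^{ik\cdot x}\frac{1}{\sqrt{|k|^2+m^2}}\,\mathrm{d}^3k$ on $\mathbb{R}^3$ coincides with $u(|x|)$ on $x\ne0$ (explicitly, $u(r)=\frac{m}{4\pi^2r}K_1(mr)$ with $K_1$ the modified Bessel function). Let $R>0$. Then for all $r\ge R$ and all $n\in\mathbb{Z}_{\ge0}$, $$|\partial_r^nu(r)|\le C_3C_4^{n+3}\,n!\,e^{-mr},$$ where $C_4=4\max\{m,\frac1R\}$ and $C_3=\frac{2}{25m}$.
   Context: This $u$ describes the equal-time two-point function $\omega^{(0)}_2|_{x^0=x'^0=0}(x,x')=u(|x-x'|)$ of the vacuum state of a free real scalar field of mass $m$ in $3+1$-dimensional Minkowski spacetime. *)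

theory Defs
  imports "HOL-Analysis.Analysis"
begin

definition besselK1 :: "real \<Rightarrow> real" where
  "besselK1 z = (LINT t:{0..}|lborel. exp (- z * cosh t) * cosh t)"

definition two_point_u :: "real \<Rightarrow> real \<Rightarrow> real" where
  "two_point_u m r = m / (4 * pi^2 * r) * besselK1 (m * r)"

end

theory Submission
  imports Defs "HOL-Real_Asymp.Real_Asymp"
begin

lemma pow_le_fact_exp:
  fixes y :: real assumes "0 \<le> y"
  shows "y ^ N \<le> fact N * exp y"
proof -
  have "y ^ N / fact N \<le> (\<Sum>n\<le>N. y ^ n / fact n)"
    by (rule member_le_sum) (use assms in auto)
  also have "\<dots> \<le> exp y"
    using assms summable_exp_generic[of y]
    by (auto simp: exp_def divide_inverse ac_simps intro!: sum_le_suminf)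
  finally show ?thesis by (simp add: field_simps)
qed

lemma sinh_nonneg_real: "0 \<le> (t::real) \<Longrightarrow> 0 \<le> sinh t"
  by simp

lemma cosh_ge_half: fixes t :: real shows "(1 + t) / 2 \<le> cosh t"
proof -
  have "1 + t \<le> exp t" by simp
  moreover have "0 \<le> exp (-t)" by simp
  ultimately have d: "1 + t \<le> exp t + exp (-t)" by linarith
  have b: "cosh t = (exp t + exp (-t)) / 2" by (simp add: cosh_def)
  show ?thesis unfolding b using d by (simp add: divide_right_mono)
qed

lemma exp_neg_integrable:
  fixes c :: real assumes "0 < c"
  shows "integrable lborel (\<lambda>t. indicator {0<..} t * exp (- c * t))"
proof -
  have "set_integrable lborel (einterval 0 \<infinity>) (\<lambda>t. exp (- c * t))"
  proof (rule interval_integral_FTC_nonneg(1)[where F="\<lambda>t. - exp (- c * t) / c" and A="-1/c" and B=0])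
    show "\<And>x. 0 < ereal x \<Longrightarrow> ereal x < \<infinity> \<Longrightarrow> ((\<lambda>t. - exp (- c * t) / c) has_real_derivative exp (- c * x)) (at x)"
      using assms by (auto intro!: derivative_eq_intros)
    show "(((\<lambda>t. - exp (- c * t) / c) \<circ> real_of_ereal) \<longlongrightarrow> - 1 / c) (at_right 0)"
      using assms by (auto simp: zero_ereal_def ereal_tendsto_simps intro!: tendsto_eq_intros)
    have *: "((\<lambda>t. - exp (- c * t) / c) \<longlongrightarrow> 0) at_top"
      using assms by real_asymp
    show "(((\<lambda>t. - exp (- c * t) / c) \<circ> real_of_ereal) \<longlongrightarrow> 0) (at_left \<infinity>)"
      unfolding ereal_tendsto_simps using * .
  qed auto
  moreover have "einterval 0 \<infinity> = ({0<..} :: real set)" by (auto simp: einterval_def)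
  ultimately show ?thesis by (simp add: set_integrable_def)
qed

lemma cosh_meas [measurable]: "(cosh :: real \<Rightarrow> real) \<in> borel_measurable borel"
  by (intro borel_measurable_continuous_onI continuous_intros)

lemma sinh_meas [measurable]: "(sinh :: real \<Rightarrow> real) \<in> borel_measurable borel"
  by (intro borel_measurable_continuous_onI continuous_intros)

lemma pow_exp_bound:
  fixes x b :: real assumes "0 < b" "0 \<le> x"
  shows "x ^ N * exp (- b * x) \<le> fact N * (2 / b) ^ N * exp (- (b / 2) * x)"
proof -
  have "x ^ N = (2 / b) ^ N * (b * x / 2) ^ N"
    using assms by (simp add: power_mult_distrib[symmetric])
  also have "\<dots> \<le> (2 / b) ^ N * (fact N * exp (b * x / 2))"
    using assms by (intro mult_left_mono pow_le_fact_exp) auto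
  finally have "x ^ N * exp (- b * x) \<le> (2 / b) ^ N * (fact N * exp (b * x / 2)) * exp (- b * x)"
    by (intro mult_right_mono) auto
  also have "\<dots> = fact N * (2 / b) ^ N * (exp (b * x / 2) * exp (- b * x))" by simp
  also have "exp (b * x / 2) * exp (- b * x) = exp (- (b / 2) * x)"
    by (simp flip: exp_add)
  finally show ?thesis .
qed

lemma integ_cs:
  fixes b :: real assumes "0 < b"
  shows "integrable lborel (\<lambda>t. indicator {0<..} t * (cosh t ^ j * sinh t ^ i * exp (- b * cosh t)))"
proof (rule Bochner_Integration.integrable_bound)
  define K where "K = fact (j + i) * (2 / b) ^ (j + i)"
  have K0: "0 \<le> K" using assms by (simp add: K_def)
  show "integrable lborel (\<lambda>t. K * (indicator {0<..} t * exp (- (b / 4) * t)))"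
    using exp_neg_integrable[of "b/4"] assms by simp
  show "(\<lambda>t. indicator {0<..} t * (cosh t ^ j * sinh t ^ i * exp (- b * cosh t))) \<in> borel_measurable lborel"
    by measurable
  show "AE t in lborel. norm (indicator {0<..} t * (cosh t ^ j * sinh t ^ i * exp (- b * cosh t)))
          \<le> norm (K * (indicator {0<..} t * exp (- (b / 4) * t)))"
  proof (rule AE_I2)
    fix t :: real
    show "norm (indicator {0<..} t * (cosh t ^ j * sinh t ^ i * exp (- b * cosh t)))
          \<le> norm (K * (indicator {0<..} t * exp (- (b / 4) * t)))"
    proof (cases "t > 0")
      case True
      have s0: "0 \<le> sinh t" using True by simp
      have "cosh t ^ j * sinh t ^ i \<le> cosh t ^ j * cosh t ^ i"
        using s0 by (intro mult_left_mono power_mono sinh_le_cosh_real) auto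
      hence "cosh t ^ j * sinh t ^ i * exp (- b * cosh t) \<le> cosh t ^ (j + i) * exp (- b * cosh t)"
        by (intro mult_right_mono) (auto simp: power_add)
      also have "\<dots> \<le> K * exp (- (b / 2) * cosh t)"
        unfolding K_def using assms by (intro pow_exp_bound) auto
      also have "\<dots> \<le> K * exp (- (b / 4) * t)"
      proof (intro mult_left_mono K0)
        have "(b / 4) * t \<le> (b / 2) * ((1 + t) / 2)" using assms True by (simp add: field_simps)
        also have "\<dots> \<le> (b / 2) * cosh t" using assms by (intro mult_left_mono cosh_ge_half) auto
        finally show "exp (- (b / 2) * cosh t) \<le> exp (- (b / 4) * t)" by simp
      qed
      finally show ?thesis using True s0 K0 by (simp add: abs_mult)
    qed simp
  qed
qed

lemma exp_diff_bound_aux: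
  fixes u v \<beta> :: real assumes "\<beta> \<le> u" "u \<le> v"
  shows "\<bar>exp (-u) - exp (-v)\<bar> \<le> exp (-\<beta>) * \<bar>u - v\<bar>"
proof -
  have e: "exp (-v) = exp (-u) * exp (-(v - u))" by (simp flip: exp_add)
  have "1 - (v - u) \<le> exp (-(v - u))" by (metis diff_conv_add_uminus exp_ge_add_one_self)
  hence "exp (-u) * (1 - exp (-(v - u))) \<le> exp (-u) * (v - u)"
    by (intro mult_left_mono) auto
  also have "\<dots> \<le> exp (-\<beta>) * (v - u)"
    using assms by (intro mult_right_mono) auto
  finally have 1: "exp (-u) - exp (-v) \<le> exp (-\<beta>) * (v - u)" unfolding e by (simp add: algebra_simps)
  have 2: "exp (-v) \<le> exp (-u)" using assms by simp
  show ?thesis using 1 2 assms by (simp add: abs_if)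
qed

lemma exp_diff_bound:
  fixes u v \<beta> :: real assumes "\<beta> \<le> u" "\<beta> \<le> v"
  shows "\<bar>exp (-u) - exp (-v)\<bar> \<le> exp (-\<beta>) * \<bar>u - v\<bar>"
proof (cases "u \<le> v")
  case True thus ?thesis using exp_diff_bound_aux assms by blast
next
  case False
  hence "\<bar>exp (-v) - exp (-u)\<bar> \<le> exp (-\<beta>) * \<bar>v - u\<bar>" using exp_diff_bound_aux assms by simp
  thus ?thesis by (simp add: abs_minus_commute)
qed

definition Gf :: "real \<Rightarrow> nat \<Rightarrow> real \<Rightarrow> real" where
  "Gf a k r = integral\<^sup>L lborel (\<lambda>t. indicator {0<..} t * (cosh t ^ k * sinh t ^ 2 * exp (- (a * r) * cosh t)))"

lemma Gf_deriv:
  fixes a r :: real assumes a: "0 < a" and r: "0 < r"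
  shows "(Gf a k has_real_derivative (- a * Gf a (Suc k) r)) (at r)"
proof -
  define g where "g s t = indicator {0<..} t * (cosh t ^ k * sinh t ^ 2 * exp (- (a * s) * cosh t))" for s t :: real
  define f where "f t = - a * (indicator {0<..} t * (cosh t ^ Suc k * sinh t ^ 2 * exp (- (a * r) * cosh t)))" for t :: real
  define w where "w t = a * (indicator {0<..} t * (cosh t ^ Suc k * sinh t ^ 2 * exp (- (a * r / 2) * cosh t)))" for t :: real
  have gint: "integrable lborel (g s)" if "0 < s" for s
    unfolding g_def using integ_cs[of "a * s" k 2] that a by simp
  have Gg: "Gf a k s = integral\<^sup>L lborel (g s)" for s unfolding Gf_def g_def by simp
  have Df: "- a * Gf a (Suc k) r = integral\<^sup>L lborel f"
    unfolding Gf_def f_def by simp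
  have wint: "integrable lborel w"
    unfolding w_def using integ_cs[of "a * r / 2" "Suc k" 2] a r by simp
  have "((\<lambda>s. (Gf a k s - Gf a k r) / (s - r)) \<longlongrightarrow> - a * Gf a (Suc k) r) (at r)"
    unfolding tendsto_at_iff_sequentially
  proof (intro allI impI)
    fix X :: "nat \<Rightarrow> real" assume Xr: "\<forall>i. X i \<in> UNIV - {r}" and X: "X \<longlonglongrightarrow> r"
    have "\<forall>\<^sub>F i in sequentially. r / 2 < X i" using X r by (intro order_tendstoD(1)) auto
    then obtain N where N: "\<And>i. i \<ge> N \<Longrightarrow> r / 2 < X i" by (auto simp: eventually_sequentially)
    define Y where "Y i = X (i + N)" for i
    have Y2: "r / 2 < Y i" for i unfolding Y_def using N by simp
    have Yr: "Y i \<noteq> r" for i unfolding Y_def using Xr by auto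
    have YL: "Y \<longlonglongrightarrow> r" unfolding Y_def using X by (rule LIMSEQ_ignore_initial_segment)
    define s where "s i t = (g (Y i) t - g r t) / (Y i - r)" for i t
    have q: "(Gf a k (Y i) - Gf a k r) / (Y i - r) = integral\<^sup>L lborel (s i)" for i
    proof -
      have "0 < Y i" using Y2[of i] r by linarith
      thus ?thesis unfolding s_def Gg
        using gint[of "Y i"] gint[OF r] by (simp add: integral_diff)
    qed
    have "(\<lambda>i. integral\<^sup>L lborel (s i)) \<longlonglongrightarrow> integral\<^sup>L lborel f"
    proof (rule integral_dominated_convergence[OF _ _ wint])
      show "f \<in> borel_measurable lborel" unfolding f_def by measurable
      show "s i \<in> borel_measurable lborel" for i unfolding s_def g_def by measurable
      show "AE t in lborel. (\<lambda>i. s i t) \<longlonglongrightarrow> f t"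
      proof (rule AE_I2)
        fix t :: real
        show "(\<lambda>i. s i t) \<longlonglongrightarrow> f t"
        proof (cases "0 < t")
          case False thus ?thesis unfolding s_def g_def f_def by simp
        next
          case True
          define E where "E x = exp (- (a * x) * cosh t)" for x
          have dE: "(E has_real_derivative (- a * cosh t * E r)) (at r)"
            unfolding E_def by (auto intro!: derivative_eq_intros)
          hence "((\<lambda>x. (E x - E r) / (x - r)) \<longlongrightarrow> - a * cosh t * E r) (at r)"
            by (simp add: has_field_derivative_iff)
          hence "((\<lambda>x. (E x - E r) / (x - r)) \<circ> Y) \<longlonglongrightarrow> - a * cosh t * E r"
            unfolding tendsto_at_iff_sequentially using Yr YL by auto
          hence "(\<lambda>i. (cosh t ^ k * sinh t ^ 2) * ((E (Y i) - E r) / (Y i - r)))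
                   \<longlonglongrightarrow> (cosh t ^ k * sinh t ^ 2) * (- a * cosh t * E r)"
            by (intro tendsto_mult_left) (simp add: comp_def)
          moreover have "s i t = (cosh t ^ k * sinh t ^ 2) * ((E (Y i) - E r) / (Y i - r))" for i
            unfolding s_def g_def E_def using True by (simp add: algebra_simps diff_divide_distrib)
          moreover have "f t = (cosh t ^ k * sinh t ^ 2) * (- a * cosh t * E r)"
            unfolding f_def E_def using True by simp
          ultimately show ?thesis by simp
        qed
      qed
      show "AE t in lborel. norm (s i t) \<le> w t" for i
      proof (rule AE_I2)
        fix t :: real
        show "norm (s i t) \<le> w t"
        proof (cases "0 < t")
          case False thus ?thesis unfolding s_def g_def w_def by simp
        next
          case True
          have c1: "1 \<le> cosh t" by (rule cosh_real_ge_1)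
          have sh: "0 \<le> sinh t" using True by simp
          have Yp: "0 < Y i" using Y2[of i] r by linarith
          have m1: "a * (r/2) \<le> a * Y i" using Y2[of i] a by (intro mult_left_mono) auto
          have b1: "a * r / 2 * cosh t \<le> a * Y i * cosh t"
            using mult_right_mono[OF m1, of "cosh t"] c1 by simp
          have m2: "a * (r/2) \<le> a * r" using a r by (intro mult_left_mono) auto
          have b2: "a * r / 2 * cosh t \<le> a * r * cosh t"
            using mult_right_mono[OF m2, of "cosh t"] c1 by simp
          have A1: "\<bar>exp (- (a * Y i * cosh t)) - exp (- (a * r * cosh t))\<bar>
                 \<le> exp (- (a * r / 2 * cosh t)) * \<bar>a * Y i * cosh t - a * r * cosh t\<bar>"
            by (rule exp_diff_bound[OF b1 b2])
          have A2: "a * Y i * cosh t - a * r * cosh t = (a * cosh t) * (Y i - r)"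
            by (simp add: algebra_simps)
          have A3: "\<bar>(a * cosh t) * (Y i - r)\<bar> = (a * cosh t) * \<bar>Y i - r\<bar>"
            using a c1 by (simp add: abs_mult)
          have pos: "0 < \<bar>Y i - r\<bar>" using Yr[of i] by simp
          have A4: "\<bar>exp (- (a * Y i * cosh t)) - exp (- (a * r * cosh t))\<bar>
                 \<le> (a * cosh t * exp (- (a * r / 2 * cosh t))) * \<bar>Y i - r\<bar>"
            using A1 unfolding A2 A3 by (simp only: mult_ac)
          have B: "\<bar>exp (- (a * Y i * cosh t)) - exp (- (a * r * cosh t))\<bar> / \<bar>Y i - r\<bar>
                 \<le> a * cosh t * exp (- (a * r / 2 * cosh t))"
            unfolding pos_divide_le_eq[OF pos] by (rule A4)
          have P0: "0 \<le> cosh t ^ k * sinh t ^ 2" by simp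
          have S: "s i t = (cosh t ^ k * sinh t ^ 2) *
               ((exp (- (a * Y i * cosh t)) - exp (- (a * r * cosh t))) / (Y i - r))"
            unfolding s_def g_def using True by (simp add: right_diff_distrib mult_ac)
          have "norm (s i t) = (cosh t ^ k * sinh t ^ 2) *
               (\<bar>exp (- (a * Y i * cosh t)) - exp (- (a * r * cosh t))\<bar> / \<bar>Y i - r\<bar>)"
            unfolding S real_norm_def abs_mult abs_divide using P0 by simp
          also have "\<dots> \<le> (cosh t ^ k * sinh t ^ 2) * (a * cosh t * exp (- (a * r / 2 * cosh t)))"
            using B sh by (intro mult_left_mono) auto
          also have "\<dots> = w t" unfolding w_def using True by (simp add: algebra_simps)
          finally show ?thesis .
        qed
      qed
    qed
    hence "(\<lambda>i. (Gf a k (Y i) - Gf a k r) / (Y i - r)) \<longlonglongrightarrow> - a * Gf a (Suc k) r"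
      unfolding q Df .
    thus "((\<lambda>s. (Gf a k s - Gf a k r) / (s - r)) \<circ> X) \<longlonglongrightarrow> - a * Gf a (Suc k) r"
      unfolding Y_def comp_def by (rule LIMSEQ_offset)
  qed
  thus ?thesis by (simp add: has_field_derivative_iff)
qed

lemma einterval_0_inf: "einterval 0 \<infinity> = ({0<..} :: real set)"
  by (auto simp: einterval_def)

lemma besselK1_ibp:
  fixes z :: real assumes z: "0 < z"
  shows "besselK1 z = z * integral\<^sup>L lborel (\<lambda>t. indicator {0<..} t * (sinh t ^ 2 * exp (- z * cosh t)))"
proof -
  define F where "F t = sinh t * exp (- z * cosh t)" for t :: real
  define f where "f t = cosh t * exp (- z * cosh t) - z * (sinh t ^ 2 * exp (- z * cosh t))" for t :: real
  have i1: "integrable lborel (\<lambda>t. indicator {0<..} t * (cosh t * exp (- z * cosh t)))"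
    using integ_cs[OF z, of 1 0] by simp
  have i2: "integrable lborel (\<lambda>t. indicator {0<..} t * (sinh t ^ 2 * exp (- z * cosh t)))"
    using integ_cs[OF z, of 0 2] by simp
  have fi: "set_integrable lborel (einterval 0 \<infinity>) f"
  proof -
    have "integrable lborel (\<lambda>t. indicator {0<..} t * (cosh t * exp (- z * cosh t))
            - z * (indicator {0<..} t * (sinh t ^ 2 * exp (- z * cosh t))))"
      using i1 i2 by (intro Bochner_Integration.integrable_diff) auto
    moreover have "(\<lambda>t. indicator {0<..} t * (cosh t * exp (- z * cosh t))
            - z * (indicator {0<..} t * (sinh t ^ 2 * exp (- z * cosh t)))) =
          (\<lambda>t. indicator {0<..} t * f t)"
      unfolding f_def by (rule ext) (simp add: right_diff_distrib mult.left_commute)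
    ultimately show ?thesis unfolding set_integrable_def einterval_0_inf by simp
  qed
  have "(LBINT t=0..\<infinity>. f t) = 0 - 0"
  proof (rule interval_integral_FTC_integrable[where F=F])
    show "(F has_vector_derivative f x) (at x)" for x
      unfolding F_def f_def has_real_derivative_iff_has_vector_derivative[symmetric]
      by (auto intro!: derivative_eq_intros simp: power2_eq_square)
    show "isCont f x" for x unfolding f_def by (intro continuous_intros)
    show "((F \<circ> real_of_ereal) \<longlongrightarrow> 0) (at_right 0)"
      unfolding zero_ereal_def ereal_tendsto_simps F_def
      by (auto intro!: tendsto_eq_intros)
    have "(F \<longlongrightarrow> 0) at_top"
      unfolding F_def sinh_field_def cosh_field_def using z by real_asymp
    thus "((F \<circ> real_of_ereal) \<longlongrightarrow> 0) (at_left \<infinity>)"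
      unfolding ereal_tendsto_simps .
  qed (use fi in auto)
  hence "integral\<^sup>L lborel (\<lambda>t. indicator {0<..} t * f t) = 0"
    using interval_integral_to_infinity_eq[where a=0 and M=lborel and f=f]
    by (simp add: zero_ereal_def set_lebesgue_integral_def)
  moreover have "integral\<^sup>L lborel (\<lambda>t. indicator {0<..} t * f t) =
      integral\<^sup>L lborel (\<lambda>t. indicator {0<..} t * (cosh t * exp (- z * cosh t)))
      - z * integral\<^sup>L lborel (\<lambda>t. indicator {0<..} t * (sinh t ^ 2 * exp (- z * cosh t)))"
  proof -
    have "(\<lambda>t. indicator {0<..} t * f t) = (\<lambda>t. indicator {0<..} t * (cosh t * exp (- z * cosh t))
            - z * (indicator {0<..} t * (sinh t ^ 2 * exp (- z * cosh t))))"
      unfolding f_def by (rule ext) (simp add: right_diff_distrib mult.left_commute)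
    thus ?thesis using i1 i2 by (simp add: integral_diff)
  qed
  moreover have "besselK1 z = integral\<^sup>L lborel (\<lambda>t. indicator {0<..} t * (cosh t * exp (- z * cosh t)))"
  proof -
    have e1: "besselK1 z = integral\<^sup>L lborel (\<lambda>t. indicator {0..} t * (cosh t * exp (- z * cosh t)))"
      unfolding besselK1_def set_lebesgue_integral_def by (simp add: mult_ac)
    have ae: "AE t in lborel. indicator {0..} t * (cosh t * exp (- z * cosh t)) =
              indicator {0<..} t * (cosh t * exp (- z * cosh t))"
      using AE_lborel_singleton[of "0::real"] by eventually_elim (auto simp: indicator_def)
    have e2: "integral\<^sup>L lborel (\<lambda>t. indicator {0..} t * (cosh t * exp (- z * cosh t))) =
       integral\<^sup>L lborel (\<lambda>t. indicator {0<..} t * (cosh t * exp (- z * cosh t)))"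
      by (rule integral_cong_AE[OF _ _ ae]) measurable
    show ?thesis using e1 e2 by simp
  qed
  ultimately show ?thesis by simp
qed

lemma sinh_exp_integral:
  fixes b :: real assumes b: "0 < b"
  shows "integrable lborel (\<lambda>t. indicator {0<..} t * (sinh t * exp (- b * (cosh t - 1))))"
    and "integral\<^sup>L lborel (\<lambda>t. indicator {0<..} t * (sinh t * exp (- b * (cosh t - 1)))) = 1 / b"
proof -
  define F where "F t = - exp (- b * (cosh t - 1)) / b" for t :: real
  have d: "(F has_real_derivative sinh x * exp (- b * (cosh x - 1))) (at x)" for x
    unfolding F_def using b by (auto intro!: derivative_eq_intros)
  have c: "isCont (\<lambda>t. sinh t * exp (- b * (cosh t - 1))) x" for x by (intro continuous_intros)
  have nn: "AE x in lborel. 0 < ereal x \<longrightarrow> ereal x < \<infinity> \<longrightarrow> 0 \<le> sinh x * exp (- b * (cosh x - 1))"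
    by (intro AE_I2) (auto simp: zero_ereal_def)
  have A: "((F \<circ> real_of_ereal) \<longlongrightarrow> -1 / b) (at_right 0)"
    unfolding zero_ereal_def ereal_tendsto_simps F_def using b
    by (auto intro!: tendsto_eq_intros)
  have "(F \<longlongrightarrow> 0) at_top"
    unfolding F_def cosh_field_def using b by real_asymp
  hence B: "((F \<circ> real_of_ereal) \<longlongrightarrow> 0) (at_left \<infinity>)"
    unfolding ereal_tendsto_simps .
  have zinf: "(0::ereal) < \<infinity>" by simp
  have FTC: "set_integrable lborel (einterval 0 \<infinity>) (\<lambda>t. sinh t * exp (- b * (cosh t - 1)))"
    "(LBINT t=0..\<infinity>. sinh t * exp (- b * (cosh t - 1))) = 0 - (-1 / b)"
    using interval_integral_FTC_nonneg[where F=F and a=0 and b=\<infinity>, OF zinf d c nn A B] by blast+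
  show "integrable lborel (\<lambda>t. indicator {0<..} t * (sinh t * exp (- b * (cosh t - 1))))"
    using FTC(1) unfolding set_integrable_def einterval_0_inf by simp
  show "integral\<^sup>L lborel (\<lambda>t. indicator {0<..} t * (sinh t * exp (- b * (cosh t - 1)))) = 1 / b"
    using FTC(2) interval_integral_to_infinity_eq[where a=0 and M=lborel and f="\<lambda>t. sinh t * exp (- b * (cosh t - 1))"]
    by (simp add: zero_ereal_def set_lebesgue_integral_def)
qed

lemma pointwise_bound:
  fixes a t :: real assumes a: "0 < a" and t: "0 \<le> t"
  shows "cosh t ^ n * sinh t ^ 2 * exp (- a * cosh t)
     \<le> (exp 1 * fact (Suc n) * max 1 (2 / a) ^ Suc n) * exp (- a) * (sinh t * exp (- (a / 2) * (cosh t - 1)))"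
proof -
  define v where "v = cosh t - 1"
  define bb where "bb = a / 2"
  define \<mu> where "\<mu> = max 1 (2 / a)"
  have v0: "0 \<le> v" unfolding v_def using cosh_real_ge_1[of t] by simp
  have bb0: "0 < bb" unfolding bb_def using a by simp
  have mu1: "1 \<le> \<mu>" unfolding \<mu>_def by simp
  have c: "cosh t = 1 + v" unfolding v_def by simp
  have sh: "0 \<le> sinh t" using t by simp
  have h1: "1 + v \<le> \<mu> * (1 + bb * v)"
  proof (cases "1 \<le> bb")
    case True
    have "1 + v \<le> 1 + bb * v" using True v0 by (simp add: mult_right_mono[of 1 bb v, simplified])
    also have "\<dots> \<le> \<mu> * (1 + bb * v)" using mu1 v0 bb0 by (simp add: mult_right_mono[of 1 \<mu>, simplified])
    finally show ?thesis .
  next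
    case False
    have m: "1 / bb \<le> \<mu>" unfolding \<mu>_def bb_def by simp
    have "1 + v \<le> (1 / bb) * (1 + bb * v)" using False bb0 v0 by (simp add: field_simps)
    also have "\<dots> \<le> \<mu> * (1 + bb * v)" using m bb0 v0 by (intro mult_right_mono) auto
    finally show ?thesis .
  qed
  have h2: "(1 + v) ^ Suc n \<le> \<mu> ^ Suc n * (1 + bb * v) ^ Suc n"
    unfolding power_mult_distrib[symmetric] using h1 v0 by (intro power_mono) auto
  have h3: "(1 + bb * v) ^ Suc n \<le> fact (Suc n) * exp (1 + bb * v)"
    using bb0 v0 by (intro pow_le_fact_exp) auto
  have h4: "cosh t ^ Suc n * exp (- a * cosh t) \<le> \<mu> ^ Suc n * (fact (Suc n) * exp (1 + bb * v)) * exp (- a * cosh t)"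
    unfolding c using h2 h3 mu1 by (intro mult_right_mono order_trans[OF h2] mult_left_mono) auto
  have h5: "exp (1 + bb * v) * exp (- a * cosh t) = exp 1 * exp (- a) * exp (- (a / 2) * (cosh t - 1))"
    unfolding c bb_def by (simp flip: exp_add add: algebra_simps)
  have h45: "\<mu> ^ Suc n * (fact (Suc n) * exp (1 + bb * v)) * exp (- a * cosh t)
      = (exp 1 * fact (Suc n) * \<mu> ^ Suc n) * exp (- a) * exp (- (a / 2) * (cosh t - 1))"
  proof -
    have "\<mu> ^ Suc n * (fact (Suc n) * exp (1 + bb * v)) * exp (- a * cosh t)
       = \<mu> ^ Suc n * fact (Suc n) * (exp (1 + bb * v) * exp (- a * cosh t))" by (simp only: mult.assoc)
    also have "\<dots> = \<mu> ^ Suc n * fact (Suc n) * (exp 1 * exp (- a) * exp (- (a / 2) * (cosh t - 1)))"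
      by (simp only: h5)
    also have "\<dots> = (exp 1 * fact (Suc n) * \<mu> ^ Suc n) * exp (- a) * exp (- (a / 2) * (cosh t - 1))"
      by (simp only: mult_ac)
    finally show ?thesis .
  qed
  have h6: "cosh t ^ Suc n * exp (- a * cosh t) \<le> (exp 1 * fact (Suc n) * \<mu> ^ Suc n) * exp (- a) * exp (- (a / 2) * (cosh t - 1))"
    using h4 unfolding h45 .
  have "cosh t ^ n * sinh t ^ 2 * exp (- a * cosh t) \<le> sinh t * (cosh t ^ Suc n * exp (- a * cosh t))"
  proof -
    have ss: "sinh t * sinh t \<le> sinh t * cosh t" using sh by (intro mult_left_mono sinh_le_cosh_real) auto
    have ss2: "cosh t ^ n * (sinh t * sinh t) \<le> cosh t ^ n * (sinh t * cosh t)"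
      by (rule mult_left_mono[OF ss]) simp
    have "cosh t ^ n * (sinh t * sinh t) * exp (- a * cosh t) \<le> cosh t ^ n * (sinh t * cosh t) * exp (- a * cosh t)"
      by (rule mult_right_mono[OF ss2]) simp
    thus ?thesis by (simp add: power2_eq_square mult_ac)
  qed
  also have "\<dots> \<le> sinh t * ((exp 1 * fact (Suc n) * \<mu> ^ Suc n) * exp (- a) * exp (- (a / 2) * (cosh t - 1)))"
    using h6 sh by (rule mult_left_mono)
  finally show ?thesis unfolding \<mu>_def by (simp add: mult_ac)
qed

lemma Gf_bound:
  fixes m r :: real assumes m: "0 < m" and r: "0 < r"
  shows "0 \<le> Gf m n r"
    and "Gf m n r \<le> (exp 1 * fact (Suc n) * max 1 (2 / (m * r)) ^ Suc n) * exp (- (m * r)) * (2 / (m * r))"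
proof -
  define a where "a = m * r"
  have a: "0 < a" unfolding a_def using m r by simp
  define Q where "Q = (exp 1 * fact (Suc n) * max 1 (2 / a) ^ Suc n) * exp (- a)"
  have fi: "integrable lborel (\<lambda>t. indicator {0<..} t * (cosh t ^ n * sinh t ^ 2 * exp (- (m * r) * cosh t)))"
    using integ_cs[of "m * r" n 2] m r by simp
  have gi: "integrable lborel (\<lambda>t. indicator {0<..} t * (sinh t * exp (- (a / 2) * (cosh t - 1))))"
    using sinh_exp_integral(1)[of "a/2"] a by simp
  have gv: "integral\<^sup>L lborel (\<lambda>t. indicator {0<..} t * (sinh t * exp (- (a / 2) * (cosh t - 1)))) = 2 / a"
    using sinh_exp_integral(2)[of "a/2"] a by simp
  show "0 \<le> Gf m n r" unfolding Gf_def
    by (intro Bochner_Integration.integral_nonneg) (auto simp: indicator_def)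
  have "Gf m n r \<le> integral\<^sup>L lborel (\<lambda>t. Q * (indicator {0<..} t * (sinh t * exp (- (a / 2) * (cosh t - 1)))))"
    unfolding Gf_def
  proof (rule integral_mono[OF fi])
    show "integrable lborel (\<lambda>t. Q * (indicator {0<..} t * (sinh t * exp (- (a / 2) * (cosh t - 1)))))"
      using gi by simp
    fix t :: real
    show "indicator {0<..} t * (cosh t ^ n * sinh t ^ 2 * exp (- (m * r) * cosh t))
       \<le> Q * (indicator {0<..} t * (sinh t * exp (- (a / 2) * (cosh t - 1))))"
    proof (cases "0 < t")
      case True
      have "cosh t ^ n * sinh t ^ 2 * exp (- a * cosh t) \<le> Q * (sinh t * exp (- (a / 2) * (cosh t - 1)))"
        using pointwise_bound[OF a, of t n] True unfolding Q_def by (simp add: mult_ac)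
      thus ?thesis using True unfolding a_def by simp
    qed simp
  qed
  also have "\<dots> = Q * (2 / a)" using gv by simp
  finally show "Gf m n r \<le> (exp 1 * fact (Suc n) * max 1 (2 / (m * r)) ^ Suc n) * exp (- (m * r)) * (2 / (m * r))"
    unfolding Q_def a_def .
qed

lemma deriv_formula:
  fixes m :: real assumes m: "0 < m"
  shows "\<forall>r>0. (deriv ^^ n) (two_point_u m) r = m ^ 2 / (4 * pi ^ 2) * (- m) ^ n * Gf m n r"
proof (induction n)
  case 0
  show ?case
  proof (intro allI impI)
    fix r :: real assume r: "0 < r"
    have "two_point_u m r = m / (4 * pi ^ 2 * r) * ((m * r) * Gf m 0 r)"
      unfolding two_point_u_def besselK1_ibp[of "m * r", OF mult_pos_pos[OF m r]] Gf_def by simp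
    also have "\<dots> = m ^ 2 / (4 * pi ^ 2) * Gf m 0 r" using r by (simp add: field_simps power2_eq_square)
    finally show "(deriv ^^ 0) (two_point_u m) r = m ^ 2 / (4 * pi ^ 2) * (- m) ^ 0 * Gf m 0 r" by simp
  qed
next
  case (Suc n)
  show ?case
  proof (intro allI impI)
    fix r :: real assume r: "0 < r"
    have d: "((\<lambda>s. m ^ 2 / (4 * pi ^ 2) * (- m) ^ n * Gf m n s) has_real_derivative
              m ^ 2 / (4 * pi ^ 2) * (- m) ^ n * (- m * Gf m (Suc n) r)) (at r)"
      by (intro DERIV_cmult Gf_deriv m r)
    have d2: "((deriv ^^ n) (two_point_u m) has_real_derivative
              m ^ 2 / (4 * pi ^ 2) * (- m) ^ n * (- m * Gf m (Suc n) r)) (at r)"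
      by (rule has_field_derivative_transform_within_open[OF d, of "{0<..}"]) (use r Suc.IH in auto)
    have "(deriv ^^ Suc n) (two_point_u m) r = deriv ((deriv ^^ n) (two_point_u m)) r" by simp
    also have "\<dots> = m ^ 2 / (4 * pi ^ 2) * (- m) ^ n * (- m * Gf m (Suc n) r)"
      by (rule DERIV_imp_deriv[OF d2])
    also have "\<dots> = m ^ 2 / (4 * pi ^ 2) * (- m) ^ Suc n * Gf m (Suc n) r" by simp
    finally show "(deriv ^^ Suc n) (two_point_u m) r = m ^ 2 / (4 * pi ^ 2) * (- m) ^ Suc n * Gf m (Suc n) r" .
  qed
qed

lemma arith_final:
  fixes m R r :: real and n :: nat
  assumes m: "0 < m" and R: "0 < R" and rR: "R \<le> r"
  shows "m ^ 2 / (4 * pi ^ 2) * m ^ n * ((exp 1 * fact (Suc n) * max 1 (2 / (m * r)) ^ Suc n) * (2 / (m * r)))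
     \<le> (2 / (25 * m)) * (4 * max m (1 / R)) ^ (n + 3) * fact n"
proof -
  define M where "M = max m (1 / R)"
  define \<mu> where "\<mu> = max 1 (2 / (m * r))"
  have r: "0 < r" using R rR by simp
  have mM: "m \<le> M" unfolding M_def by simp
  have M0: "0 < M" using m mM by simp
  have rM: "1 / r \<le> M"
  proof -
    have "1 / r \<le> 1 / R" using R rR by (intro divide_left_mono) auto
    also have "\<dots> \<le> M" unfolding M_def by simp
    finally show ?thesis .
  qed
  have mmu: "m * \<mu> = max m (2 / r)" unfolding \<mu>_def using m r
    by (simp add: max_def field_simps)
  have mmu2: "m * \<mu> \<le> 2 * M" unfolding mmu using mM rM M0 by (auto simp: field_simps)
  have mu0: "0 \<le> m * \<mu>" unfolding mmu using m by simp
  have s1: "m ^ 2 / (4 * pi ^ 2) * m ^ n * ((exp 1 * fact (Suc n) * \<mu> ^ Suc n) * (2 / (m * r)))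
       = (2 * exp 1 / (4 * pi ^ 2)) * fact (Suc n) * (m * \<mu>) ^ Suc n * (1 / r)"
    using m r by (simp add: field_simps power_mult_distrib power2_eq_square)
  have s2: "(m * \<mu>) ^ Suc n \<le> (2 * M) ^ Suc n" by (rule power_mono[OF mmu2 mu0])
  have s4: "fact (Suc n) \<le> (2::real) ^ Suc n * fact n"
  proof -
    have "Suc n < 2 ^ Suc n" by (rule less_exp)
    hence "real (Suc n) \<le> 2 ^ Suc n" by (metis less_imp_le of_nat_le_iff of_nat_numeral of_nat_power)
    thus ?thesis by (simp add: mult_right_mono)
  qed
  have e3: "exp 1 \<le> (3::real)" by (rule exp_le)
  have p3: "3 < pi" by (rule pi_gt3)
  have s5: "2 * exp 1 / (4 * pi ^ 2) \<le> 32 / 25"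
  proof -
    have "(3::real) ^ 2 < pi ^ 2" using p3 by (intro power_strict_mono) auto
    hence "9 < pi ^ 2" by simp
    hence "2 * exp 1 \<le> 32 / 25 * (4 * pi ^ 2)" using e3 by linarith
    thus ?thesis by (simp add: divide_le_eq)
  qed
  have c0: "0 \<le> 2 * exp 1 / (4 * pi ^ 2)" by simp
  have "(2 * exp 1 / (4 * pi ^ 2)) * fact (Suc n) * (m * \<mu>) ^ Suc n * (1 / r)
      \<le> (32 / 25) * ((2::real) ^ Suc n * fact n) * (2 * M) ^ Suc n * M"
  proof -
    have t1: "(2 * exp 1 / (4 * pi ^ 2)) * fact (Suc n) \<le> (32 / 25) * ((2::real) ^ Suc n * fact n)"
      by (rule mult_mono[OF s5 s4]) auto
    have t2: "(2 * exp 1 / (4 * pi ^ 2)) * fact (Suc n) * (m * \<mu>) ^ Suc n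
       \<le> (32 / 25) * ((2::real) ^ Suc n * fact n) * (2 * M) ^ Suc n"
      by (rule mult_mono[OF t1 s2]) (use mu0 in auto)
    show ?thesis
      by (rule mult_mono[OF t2 rM]) (use M0 r in auto)
  qed
  also have "\<dots> = (32 / 25) * (4 ^ Suc n * M ^ (n + 2) * fact n)"
  proof -
    have q1: "(2::real) ^ Suc n * 2 ^ Suc n = 4 ^ Suc n" by (simp flip: power_mult_distrib)
    have q2: "(2 * M) ^ Suc n = 2 ^ Suc n * M ^ Suc n" by (rule power_mult_distrib)
    have q3: "M ^ Suc n * M = M ^ (n + 2)" by simp
    have "(32 / 25) * ((2::real) ^ Suc n * fact n) * (2 * M) ^ Suc n * M
        = (32 / 25) * ((2 ^ Suc n * 2 ^ Suc n) * (M ^ Suc n * M) * fact n)"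
      unfolding q2 by (simp only: mult_ac)
    thus ?thesis unfolding q1 q3 .
  qed
  also have "\<dots> \<le> (32 / 25) * (4 ^ Suc n * M ^ (n + 2) * fact n) * (M / m)"
  proof -
    have "1 \<le> M / m" using mM m by simp
    from mult_left_mono[OF this, of "(32 / 25) * (4 ^ Suc n * M ^ (n + 2) * fact n)"]
    show ?thesis using M0 by simp
  qed
  also have "\<dots> = (2 / (25 * m)) * (4 * M) ^ (n + 3) * fact n"
  proof -
    have "(4 * M) ^ (n + 3) = 16 * (4 ^ Suc n * (M ^ (n + 2) * M))"
    proof -
      have e: "n + 3 = Suc (Suc (Suc n))" "n + 2 = Suc (Suc n)" by simp_all
      show ?thesis unfolding e by (simp add: power_mult_distrib mult_ac)
    qed
    thus ?thesis using m by (simp add: field_simps)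
  qed
  finally show ?thesis unfolding \<mu>_def[symmetric] M_def[symmetric] s1 .
qed

theorem mainTheorem10:
  fixes m R r :: real and n :: nat
  assumes "m > 0" and "R > 0" and "r \<ge> R"
  shows "\<bar>(deriv ^^ n) (two_point_u m) r\<bar>
           \<le> (2 / (25 * m)) * (4 * max m (1 / R)) ^ (n + 3) * fact n * exp (- m * r)"
proof -
  have m: "0 < m" using assms by simp
  have r: "0 < r" using assms by simp
  have D: "(deriv ^^ n) (two_point_u m) r = m ^ 2 / (4 * pi ^ 2) * (- m) ^ n * Gf m n r"
    using deriv_formula[OF m] r by blast
  have G0: "0 \<le> Gf m n r" by (rule Gf_bound(1)[OF m r])
  have Gb: "Gf m n r \<le> (exp 1 * fact (Suc n) * max 1 (2 / (m * r)) ^ Suc n) * exp (- (m * r)) * (2 / (m * r))"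
    by (rule Gf_bound(2)[OF m r])
  have "\<bar>(deriv ^^ n) (two_point_u m) r\<bar> = m ^ 2 / (4 * pi ^ 2) * m ^ n * Gf m n r"
    unfolding D using G0 m by (simp add: abs_mult power_abs)
  also have "\<dots> \<le> m ^ 2 / (4 * pi ^ 2) * m ^ n *
      ((exp 1 * fact (Suc n) * max 1 (2 / (m * r)) ^ Suc n) * exp (- (m * r)) * (2 / (m * r)))"
    using m by (intro mult_left_mono[OF Gb]) simp
  also have "\<dots> = (m ^ 2 / (4 * pi ^ 2) * m ^ n *
      ((exp 1 * fact (Suc n) * max 1 (2 / (m * r)) ^ Suc n) * (2 / (m * r)))) * exp (- m * r)"
    by (simp add: mult_ac)
  also have "\<dots> \<le> (2 / (25 * m)) * (4 * max m (1 / R)) ^ (n + 3) * fact n * exp (- m * r)"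
    by (rule mult_right_mono[OF arith_final[OF m]]) (use assms in auto)
  finally show ?thesis .
qed

end
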